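(* Let $\Lambda=(\alpha,\lambda,f)$ be a twisted $S$-module structure on a semilattice of groups $A$ over an inverse semigroup $S$, and consider the extension $A\overset{i}{\to}A*_\Lambda S\overset{j}{\to}S$. Then $\rho(s)=\alpha(ss^{-1})\delta_s$ is a transversal of $j$, and the twisted $S$-module structure induced by $\rho$ is $(\alpha,\lambda',f)$ where $$\lambda'_s(a)=\lambda_s(a)f(s,s^{-1})^{-1}f(s,\alpha^{-1}(aa^{-1}))f(s\alpha^{-1}(aa^{-1}),s^{-1})\quad(s\in S,\ a\in A).$$
   Context: A semilattice of groups is an inverse semigroup $A$ whose idempotents are central; $A_e=\{a: aa^{-1}=a^{-1}a=e\}$. An endomorphism $\varphi$ of $A$ is relatively invertible if there are $\bar\varphi\in\mathrm{End}\,A$, $e_\varphi\in E(A)$ with $\bar\varphi\varphi(a)=e_\varphi a$, $\varphi\bar\varphi(a)=\varphi(e_\varphi)a$, $e_\varphi$ the identity of $\bar\varphi(A)$, $\varphi(e_\varphi)$ the identity of $\varphi(A)$. A twisted $S$-module structure on $A$ is $(\alpha,\lambda,f)$ with $\alpha:E(S)\to E(A)$ an isomorphism, $s\mapsto\lambda_s$ relatively invertible endomorphisms, $f:S\times S\to A$ with $f(s,t)\in A_{\alpha(stt^{-1}s^{-1})}$, satisfying (i) $\lambda_e(a)=\alpha(e)a$ for $e\in E(S)$; (ii) $\lambda_s(\alpha(e))=\alpha(ses^{-1})$; (iii) $\lambda_s\lambda_t(a)=f(s,t)\lambda_{st}(a)f(s,t)^{-1}$; (iv) $f(se,e)=\alpha(ses^{-1})$,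 $f(e,es)=\alpha(ess^{-1})$; (v) $\lambda_s(f(t,u))f(s,tu)=f(s,t)f(st,u)$. The crossed product $A*_\Lambda S=\{a\delta_s: a\in A,s\in S, aa^{-1}=\alpha(ss^{-1})\}$ with $a\delta_s\cdot b\delta_t=a\lambda_s(b)f(s,t)\delta_{st}$ is an inverse semigroup, and with $i(a)=a\delta_{\alpha^{-1}(aa^{-1})}$, $j(a\delta_s)=s$ it is an extension of $A$ by $S$ (i.e. $i$ is a monomorphism, $j$ an idempotent-separating epimorphism, $i(A)=j^{-1}(E(S))$). A transversal of $j$ is $\rho:S\to A*_\Lambda S$ with $j\circ\rho=\mathrm{id}$ and $\rho(E(S))\subseteq E(A*_\Lambda S)$; the structure it induces is $(\alpha_\rho,\lambda_\rho,f_\rho)$ with $\alpha_\rho=i^{-1}\circ\rho|_{E(S)}$, $(\lambda_\rho)_s(a)=i^{-1}(\rho(s)i(a)\rho(s)^{-1})$, and $f_\rho(s,t)$ the unique element of $A_{\alpha_\rho(stt^{-1}s^{-1})}$ with $\rho(s)\rho(t)=i(f_\rho(s,t))\rho(st)$. *)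

theory Defs
  imports Main
begin

definition semigroup_on :: "'a set \<Rightarrow> ('a \<Rightarrow> 'a \<Rightarrow> 'a) \<Rightarrow> bool" where
  "semigroup_on C m \<longleftrightarrow> (\<forall>x\<in>C. \<forall>y\<in>C. m x y \<in> C) \<and>
     (\<forall>x\<in>C. \<forall>y\<in>C. \<forall>z\<in>C. m (m x y) z = m x (m y z))"

definition inverse_semigroup :: "'a set \<Rightarrow> ('a \<Rightarrow> 'a \<Rightarrow> 'a) \<Rightarrow> bool" where
  "inverse_semigroup C m \<longleftrightarrow> semigroup_on C m \<and>
     (\<forall>x\<in>C. \<exists>!y. y \<in> C \<and> m (m x y) x = x \<and> m (m y x) y = y)"

definition sinv :: "'a set \<Rightarrow> ('a \<Rightarrow> 'a \<Rightarrow> 'a) \<Rightarrow> 'a \<Rightarrow> 'a" where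
  "sinv C m x = (THE y. y \<in> C \<and> m (m x y) x = x \<and> m (m y x) y = y)"

definition idems :: "'a set \<Rightarrow> ('a \<Rightarrow> 'a \<Rightarrow> 'a) \<Rightarrow> 'a set" where
  "idems C m = {e \<in> C. m e e = e}"

definition semilattice_of_groups :: "'a set \<Rightarrow> ('a \<Rightarrow> 'a \<Rightarrow> 'a) \<Rightarrow> bool" where
  "semilattice_of_groups C m \<longleftrightarrow> inverse_semigroup C m \<and>
     (\<forall>e\<in>idems C m. \<forall>x\<in>C. m e x = m x e)"

definition group_part :: "'a set \<Rightarrow> ('a \<Rightarrow> 'a \<Rightarrow> 'a) \<Rightarrow> 'a \<Rightarrow> 'a set" where
  "group_part C m e = {a \<in> C. m a (sinv C m a) = e \<and> m (sinv C m a) a = e}"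

definition endo :: "'a set \<Rightarrow> ('a \<Rightarrow> 'a \<Rightarrow> 'a) \<Rightarrow> ('a \<Rightarrow> 'a) \<Rightarrow> bool" where
  "endo C m \<phi> \<longleftrightarrow> (\<forall>a\<in>C. \<phi> a \<in> C) \<and> (\<forall>a\<in>C. \<forall>b\<in>C. \<phi> (m a b) = m (\<phi> a) (\<phi> b))"

definition is_identity_of :: "('a \<Rightarrow> 'a \<Rightarrow> 'a) \<Rightarrow> 'a set \<Rightarrow> 'a \<Rightarrow> bool" where
  "is_identity_of m X e \<longleftrightarrow> e \<in> X \<and> (\<forall>x\<in>X. m e x = x \<and> m x e = x)"

definition rel_invertible :: "'a set \<Rightarrow> ('a \<Rightarrow> 'a \<Rightarrow> 'a) \<Rightarrow> ('a \<Rightarrow> 'a) \<Rightarrow> bool" where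
  "rel_invertible C m \<phi> \<longleftrightarrow> endo C m \<phi> \<and>
     (\<exists>\<psi> e. endo C m \<psi> \<and> e \<in> idems C m \<and>
        (\<forall>a\<in>C. \<psi> (\<phi> a) = m e a) \<and> (\<forall>a\<in>C. \<phi> (\<psi> a) = m (\<phi> e) a) \<and>
        is_identity_of m (\<psi> ` C) e \<and> is_identity_of m (\<phi> ` C) (\<phi> e))"

definition twisted_module ::
  "'a set \<Rightarrow> ('a \<Rightarrow> 'a \<Rightarrow> 'a) \<Rightarrow> 's set \<Rightarrow> ('s \<Rightarrow> 's \<Rightarrow> 's) \<Rightarrow>
   ('s \<Rightarrow> 'a) \<Rightarrow> ('s \<Rightarrow> 'a \<Rightarrow> 'a) \<Rightarrow> ('s \<Rightarrow> 's \<Rightarrow> 'a) \<Rightarrow> bool" where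
  "twisted_module A mA S mS \<alpha> lam f \<longleftrightarrow>
     bij_betw \<alpha> (idems S mS) (idems A mA) \<and>
     (\<forall>e\<in>idems S mS. \<forall>e'\<in>idems S mS. \<alpha> (mS e e') = mA (\<alpha> e) (\<alpha> e')) \<and>
     (\<forall>s\<in>S. rel_invertible A mA (lam s)) \<and>
     (\<forall>s\<in>S. \<forall>t\<in>S. f s t \<in> group_part A mA
          (\<alpha> (mS (mS (mS s t) (sinv S mS t)) (sinv S mS s)))) \<and>
     (\<forall>e\<in>idems S mS. \<forall>a\<in>A. lam e a = mA (\<alpha> e) a) \<and>
     (\<forall>s\<in>S. \<forall>e\<in>idems S mS. lam s (\<alpha> e) = \<alpha> (mS (mS s e) (sinv S mS s))) \<and>
     (\<forall>s\<in>S. \<forall>t\<in>S. \<forall>a\<in>A.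
          lam s (lam t a) = mA (mA (f s t) (lam (mS s t) a)) (sinv A mA (f s t))) \<and>
     (\<forall>s\<in>S. \<forall>e\<in>idems S mS.
          f (mS s e) e = \<alpha> (mS (mS s e) (sinv S mS s)) \<and>
          f e (mS e s) = \<alpha> (mS (mS e s) (sinv S mS s))) \<and>
     (\<forall>s\<in>S. \<forall>t\<in>S. \<forall>u\<in>S.
          mA (lam s (f t u)) (f s (mS t u)) = mA (f s t) (f (mS s t) u))"

text \<open>Crossed product A *_Lambda S: elements a delta_s are pairs (a, s).\<close>
definition cp_carrier ::
  "'a set \<Rightarrow> ('a \<Rightarrow> 'a \<Rightarrow> 'a) \<Rightarrow> 's set \<Rightarrow> ('s \<Rightarrow> 's \<Rightarrow> 's) \<Rightarrow> ('s \<Rightarrow> 'a) \<Rightarrow> ('a \<times> 's) set" where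
  "cp_carrier A mA S mS \<alpha> =
     {(a, s). a \<in> A \<and> s \<in> S \<and> mA a (sinv A mA a) = \<alpha> (mS s (sinv S mS s))}"

definition cp_mult ::
  "('a \<Rightarrow> 'a \<Rightarrow> 'a) \<Rightarrow> ('s \<Rightarrow> 's \<Rightarrow> 's) \<Rightarrow> ('s \<Rightarrow> 'a \<Rightarrow> 'a) \<Rightarrow> ('s \<Rightarrow> 's \<Rightarrow> 'a) \<Rightarrow>
   ('a \<times> 's) \<Rightarrow> ('a \<times> 's) \<Rightarrow> ('a \<times> 's)" where
  "cp_mult mA mS lam f x y =
     (mA (mA (fst x) (lam (snd x) (fst y))) (f (snd x) (snd y)), mS (snd x) (snd y))"

definition cp_incl ::
  "'a set \<Rightarrow> ('a \<Rightarrow> 'a \<Rightarrow> 'a) \<Rightarrow> 's set \<Rightarrow> ('s \<Rightarrow> 's \<Rightarrow> 's) \<Rightarrow> ('s \<Rightarrow> 'a) \<Rightarrow> 'a \<Rightarrow> 'a \<times> 's" where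
  "cp_incl A mA S mS \<alpha> a = (a, inv_into (idems S mS) \<alpha> (mA a (sinv A mA a)))"

definition transversal ::
  "'c set \<Rightarrow> ('c \<Rightarrow> 'c \<Rightarrow> 'c) \<Rightarrow> 's set \<Rightarrow> ('s \<Rightarrow> 's \<Rightarrow> 's) \<Rightarrow> ('c \<Rightarrow> 's) \<Rightarrow> ('s \<Rightarrow> 'c) \<Rightarrow> bool" where
  "transversal C mC S mS j \<rho> \<longleftrightarrow>
     (\<forall>s\<in>S. \<rho> s \<in> C \<and> j (\<rho> s) = s) \<and> \<rho> ` idems S mS \<subseteq> idems C mC"

definition induced_alpha :: "'a set \<Rightarrow> ('a \<Rightarrow> 'c) \<Rightarrow> ('s \<Rightarrow> 'c) \<Rightarrow> 's \<Rightarrow> 'a" where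
  "induced_alpha A i \<rho> e = inv_into A i (\<rho> e)"

definition induced_lambda ::
  "'a set \<Rightarrow> 'c set \<Rightarrow> ('c \<Rightarrow> 'c \<Rightarrow> 'c) \<Rightarrow> ('a \<Rightarrow> 'c) \<Rightarrow> ('s \<Rightarrow> 'c) \<Rightarrow> 's \<Rightarrow> 'a \<Rightarrow> 'a" where
  "induced_lambda A C mC i \<rho> s a = inv_into A i (mC (mC (\<rho> s) (i a)) (sinv C mC (\<rho> s)))"

definition induced_f ::
  "'a set \<Rightarrow> ('a \<Rightarrow> 'a \<Rightarrow> 'a) \<Rightarrow> 's set \<Rightarrow> ('s \<Rightarrow> 's \<Rightarrow> 's) \<Rightarrow> 'c set \<Rightarrow> ('c \<Rightarrow> 'c \<Rightarrow> 'c) \<Rightarrow>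
   ('a \<Rightarrow> 'c) \<Rightarrow> ('s \<Rightarrow> 'c) \<Rightarrow> 's \<Rightarrow> 's \<Rightarrow> 'a" where
  "induced_f A mA S mS C mC i \<rho> s t =
     (THE x. x \<in> group_part A mA
               (induced_alpha A i \<rho> (mS (mS (mS s t) (sinv S mS t)) (sinv S mS s))) \<and>
             mC (\<rho> s) (\<rho> t) = mC (i x) (\<rho> (mS s t)))"

end

theory Submission
  imports Defs
begin


locale invsg =
  fixes C :: "'a set" and m :: "'a \<Rightarrow> 'a \<Rightarrow> 'a" (infixl "\<cdot>" 70)
  assumes isg: "inverse_semigroup C m"
begin

abbreviation iv where "iv \<equiv> sinv C m"

lemma closed[simp]: "x \<in> C \<Longrightarrow> y \<in> C \<Longrightarrow> x \<cdot> y \<in> C"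
  using isg unfolding inverse_semigroup_def semigroup_on_def by blast

lemma assoc: "x \<in> C \<Longrightarrow> y \<in> C \<Longrightarrow> z \<in> C \<Longrightarrow> x \<cdot> y \<cdot> z = x \<cdot> (y \<cdot> z)"
  using isg unfolding inverse_semigroup_def semigroup_on_def by blast

lemma inv_ex: assumes "x \<in> C"
  shows "iv x \<in> C \<and> x \<cdot> iv x \<cdot> x = x \<and> iv x \<cdot> x \<cdot> iv x = iv x"
proof -
  have "\<exists>!y. y \<in> C \<and> x \<cdot> y \<cdot> x = x \<and> y \<cdot> x \<cdot> y = y"
    using isg assms unfolding inverse_semigroup_def by blast
  from theI'[OF this] show ?thesis unfolding sinv_def .
qed

lemma inv_closed[simp]: "x \<in> C \<Longrightarrow> iv x \<in> C" using inv_ex by blast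

lemma inv_uniq: assumes "x \<in> C" "y \<in> C" "x \<cdot> y \<cdot> x = x" "y \<cdot> x \<cdot> y = y"
  shows "iv x = y"
proof -
  have "\<exists>!y. y \<in> C \<and> x \<cdot> y \<cdot> x = x \<and> y \<cdot> x \<cdot> y = y"
    using isg assms unfolding inverse_semigroup_def by blast
  then show ?thesis unfolding sinv_def by (rule the1_equality) (use assms in auto)
qed

lemma ee_z: "e \<cdot> e = e \<Longrightarrow> e \<in> C \<Longrightarrow> z \<in> C \<Longrightarrow> e \<cdot> (e \<cdot> z) = e \<cdot> z"
  by (metis assoc)

lemma xix: "x \<in> C \<Longrightarrow> x \<cdot> (iv x \<cdot> x) = x" using inv_ex assoc by (metis inv_closed)
lemma ixi: "x \<in> C \<Longrightarrow> iv x \<cdot> (x \<cdot> iv x) = iv x" using inv_ex assoc by (metis inv_closed)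

lemma inv_inv[simp]: "x \<in> C \<Longrightarrow> iv (iv x) = x"
  by (rule inv_uniq) (use inv_ex in auto)

definition "E = idems C m"

lemma idemsI: "e \<in> C \<Longrightarrow> e \<cdot> e = e \<Longrightarrow> e \<in> idems C m" by (simp add: idems_def)
lemma idemsD: "e \<in> idems C m \<Longrightarrow> e \<in> C \<and> e \<cdot> e = e" by (simp add: idems_def)

lemma idem_inv: "e \<in> idems C m \<Longrightarrow> iv e = e"
  by (rule inv_uniq) (auto dest: idemsD)

lemma xxi_idem: "x \<in> C \<Longrightarrow> x \<cdot> iv x \<in> idems C m"
  by (rule idemsI) (auto simp: assoc xix[symmetric] ixi)
lemma ixx_idem: "x \<in> C \<Longrightarrow> iv x \<cdot> x \<in> idems C m"
  by (rule idemsI) (auto simp: assoc xix ixi)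

lemma idem_prod_idem: assumes e: "e \<in> idems C m" and f: "f \<in> idems C m"
  shows "e \<cdot> f \<in> idems C m"
proof -
  have eC: "e \<in> C" "e \<cdot> e = e" and fC: "f \<in> C" "f \<cdot> f = f" using e f by (auto dest: idemsD)
  define a where "a = e \<cdot> f"
  define x where "x = iv a"
  have aC: "a \<in> C" using eC fC a_def by simp
  have xC: "x \<in> C" using aC x_def by simp
  have axa: "a \<cdot> x \<cdot> a = a" and xax: "x \<cdot> a \<cdot> x = x" using inv_ex[OF aC] x_def by auto
  define y where "y = f \<cdot> x \<cdot> e"
  have yC: "y \<in> C" using y_def xC eC fC by simp
  have "a \<cdot> y \<cdot> a = a \<cdot> x \<cdot> a" using eC fC xC by (simp add: a_def y_def assoc ee_z)
  then have 1: "a \<cdot> y \<cdot> a = a" using axa by simp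
  have "y \<cdot> a \<cdot> y = f \<cdot> (x \<cdot> a \<cdot> x) \<cdot> e"
    using eC fC xC by (simp add: a_def y_def assoc ee_z)
  then have 2: "y \<cdot> a \<cdot> y = y" using xax y_def by simp
  have xy: "x = y" using inv_uniq[OF aC yC 1 2] x_def by simp
  have "y \<cdot> y = f \<cdot> (x \<cdot> a \<cdot> x) \<cdot> e"
    using eC fC xC by (simp add: a_def y_def assoc ee_z)
  also have "\<dots> = y" using xax y_def by simp
  finally have xx: "x \<cdot> x = x" using xy by simp
  have "iv x = x" using idem_inv[OF idemsI[OF xC xx]] .
  moreover have "iv x = a" using x_def aC by simp
  ultimately have "a = x" by simp
  then show ?thesis using xx xC a_def by (simp add: idemsI)
qed

lemma idem_comm: assumes e: "e \<in> idems C m" and f: "f \<in> idems C m"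
  shows "e \<cdot> f = f \<cdot> e"
proof -
  have eC: "e \<in> C" "e \<cdot> e = e" and fC: "f \<in> C" "f \<cdot> f = f" using e f by (auto dest: idemsD)
  have ef: "e \<cdot> f \<in> idems C m" and fe: "f \<cdot> e \<in> idems C m" using idem_prod_idem e f by auto
  have efe: "e \<cdot> f \<cdot> (e \<cdot> f) = e \<cdot> f" and fef: "f \<cdot> e \<cdot> (f \<cdot> e) = f \<cdot> e" using ef fe by (auto dest: idemsD)
  have "e \<cdot> f \<cdot> (f \<cdot> e) \<cdot> (e \<cdot> f) = e \<cdot> f \<cdot> (e \<cdot> f)"
    using eC fC by (simp add: assoc ee_z)
  then have 1: "e \<cdot> f \<cdot> (f \<cdot> e) \<cdot> (e \<cdot> f) = e \<cdot> f" using efe by simp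
  have "f \<cdot> e \<cdot> (e \<cdot> f) \<cdot> (f \<cdot> e) = f \<cdot> e \<cdot> (f \<cdot> e)"
    using eC fC by (simp add: assoc ee_z)
  then have 2: "f \<cdot> e \<cdot> (e \<cdot> f) \<cdot> (f \<cdot> e) = f \<cdot> e" using fef by simp
  have "iv (e \<cdot> f) = f \<cdot> e" using inv_uniq[OF _ _ 1 2] eC fC by simp
  then show ?thesis using idem_inv[OF ef] by simp
qed

lemma inv_mult: assumes "x \<in> C" "y \<in> C" shows "iv (x \<cdot> y) = iv y \<cdot> iv x"
proof (rule inv_uniq)
  have c: "y \<cdot> iv y \<cdot> (iv x \<cdot> x) = iv x \<cdot> x \<cdot> (y \<cdot> iv y)"
    using idem_comm xxi_idem ixx_idem assms by blast
  have "x \<cdot> y \<cdot> (iv y \<cdot> iv x) \<cdot> (x \<cdot> y) = x \<cdot> (y \<cdot> iv y \<cdot> (iv x \<cdot> x)) \<cdot> y"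
    using assms by (simp add: assoc)
  also have "\<dots> = x \<cdot> (iv x \<cdot> x \<cdot> (y \<cdot> iv y)) \<cdot> y" using c by simp
  also have "\<dots> = (x \<cdot> (iv x \<cdot> x)) \<cdot> (y \<cdot> (iv y \<cdot> y))" using assms by (simp add: assoc)
  finally show "x \<cdot> y \<cdot> (iv y \<cdot> iv x) \<cdot> (x \<cdot> y) = x \<cdot> y" using xix assms by simp
  have "iv y \<cdot> iv x \<cdot> (x \<cdot> y) \<cdot> (iv y \<cdot> iv x) = iv y \<cdot> (iv x \<cdot> x \<cdot> (y \<cdot> iv y)) \<cdot> iv x"
    using assms by (simp add: assoc)
  also have "\<dots> = iv y \<cdot> (y \<cdot> iv y \<cdot> (iv x \<cdot> x)) \<cdot> iv x" using c by simp
  also have "\<dots> = (iv y \<cdot> (y \<cdot> iv y)) \<cdot> (iv x \<cdot> (x \<cdot> iv x))" using assms by (simp add: assoc)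
  finally show "iv y \<cdot> iv x \<cdot> (x \<cdot> y) \<cdot> (iv y \<cdot> iv x) = iv y \<cdot> iv x" using ixi assms by simp
qed (use assms in auto)

end



context invsg begin
lemma endo_inv: assumes "endo C m \<phi>" "x \<in> C" shows "\<phi> (iv x) = iv (\<phi> x)"
proof -
  have h: "\<And>a b. a \<in> C \<Longrightarrow> b \<in> C \<Longrightarrow> \<phi> (a \<cdot> b) = \<phi> a \<cdot> \<phi> b"
    and c: "\<And>a. a \<in> C \<Longrightarrow> \<phi> a \<in> C" using assms(1) unfolding endo_def by auto
  have ic: "iv x \<in> C" using assms(2) by simp
  have "\<phi> x \<cdot> \<phi> (iv x) \<cdot> \<phi> x = \<phi> (x \<cdot> iv x \<cdot> x)" using h assms(2) ic by simp
  then have 1: "\<phi> x \<cdot> \<phi> (iv x) \<cdot> \<phi> x = \<phi> x" using inv_ex[OF assms(2)] by simp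
  have "\<phi> (iv x) \<cdot> \<phi> x \<cdot> \<phi> (iv x) = \<phi> (iv x \<cdot> x \<cdot> iv x)" using h assms(2) ic by simp
  then have 2: "\<phi> (iv x) \<cdot> \<phi> x \<cdot> \<phi> (iv x) = \<phi> (iv x)" using inv_ex[OF assms(2)] by simp
  show ?thesis using inv_uniq[OF c c 1 2] assms by simp
qed

lemma endo_idem: assumes "endo C m \<phi>" "e \<in> idems C m" shows "\<phi> e \<in> idems C m"
proof -
  have "e \<in> C" "e \<cdot> e = e" using assms(2) by (auto dest: idemsD)
  then have "\<phi> e \<cdot> \<phi> e = \<phi> e" "\<phi> e \<in> C" using assms(1) unfolding endo_def by metis+
  then show ?thesis by (simp add: idemsI)
qed

lemma conj_idem: assumes "x \<in> C" "e \<in> idems C m" shows "x \<cdot> e \<cdot> iv x \<in> idems C m"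
proof (rule idemsI)
  have eC: "e \<in> C" "e \<cdot> e = e" using assms(2) by (auto dest: idemsD)
  have c: "e \<cdot> (iv x \<cdot> x) = iv x \<cdot> x \<cdot> e" using idem_comm assms ixx_idem by blast
  have "x \<cdot> e \<cdot> iv x \<cdot> (x \<cdot> e \<cdot> iv x) = x \<cdot> (e \<cdot> (iv x \<cdot> x)) \<cdot> e \<cdot> iv x"
    using assms eC by (simp add: assoc)
  also have "\<dots> = (x \<cdot> (iv x \<cdot> x)) \<cdot> (e \<cdot> e) \<cdot> iv x" unfolding c using assms eC by (simp add: assoc)
  finally show "x \<cdot> e \<cdot> iv x \<cdot> (x \<cdot> e \<cdot> iv x) = x \<cdot> e \<cdot> iv x" using xix assms eC by simp
qed (use assms idemsD in auto)

end

locale slg = invsg +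
  assumes central: "e \<in> idems C m \<Longrightarrow> x \<in> C \<Longrightarrow> e \<cdot> x = x \<cdot> e"
begin

abbreviation gp where "gp \<equiv> group_part C m"

lemma xxi_eq: assumes "x \<in> C" shows "x \<cdot> iv x = iv x \<cdot> x"
proof -
  have e: "iv x \<cdot> x \<in> idems C m" and f: "x \<cdot> iv x \<in> idems C m" using assms xxi_idem ixx_idem by auto
  have "x \<cdot> iv x = (x \<cdot> (iv x \<cdot> x)) \<cdot> iv x" using xix assms by simp
  also have "\<dots> = ((iv x \<cdot> x) \<cdot> x) \<cdot> iv x" using central[OF e, of x] assms by simp
  also have "\<dots> = (iv x \<cdot> x) \<cdot> (x \<cdot> iv x)" using assms by (simp add: assoc)
  finally have 1: "x \<cdot> iv x = (iv x \<cdot> x) \<cdot> (x \<cdot> iv x)" .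
  have "iv x \<cdot> x = (iv x \<cdot> (x \<cdot> iv x)) \<cdot> x" using ixi assms by simp
  also have "\<dots> = ((x \<cdot> iv x) \<cdot> iv x) \<cdot> x" using central[OF f, of "iv x"] assms by simp
  also have "\<dots> = (x \<cdot> iv x) \<cdot> (iv x \<cdot> x)" using assms by (simp add: assoc)
  finally show ?thesis using 1 idem_comm[OF e f] by simp
qed

lemma gpD: "x \<in> gp e \<Longrightarrow> x \<in> C \<and> x \<cdot> iv x = e \<and> iv x \<cdot> x = e"
  by (simp add: group_part_def)

lemma gp_self: "x \<in> C \<Longrightarrow> x \<in> gp (x \<cdot> iv x)"
  using xxi_eq by (simp add: group_part_def)

lemma gpI: "x \<in> C \<Longrightarrow> x \<cdot> iv x = e \<Longrightarrow> x \<in> gp e"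
  using gp_self by metis

lemma gp_idem: "x \<in> gp e \<Longrightarrow> e \<in> idems C m"
  using gpD xxi_idem by metis

lemma gp_l: "x \<in> gp e \<Longrightarrow> e \<cdot> x = x"
  using gpD inv_ex by metis
lemma gp_r: "x \<in> gp e \<Longrightarrow> x \<cdot> e = x"
  using gpD xix by metis

lemma gp_inv: assumes "x \<in> gp e" shows "iv x \<in> gp e"
proof -
  have "x \<in> C" "x \<cdot> iv x = e" "iv x \<cdot> x = e" using gpD[OF assms] by auto
  then show ?thesis unfolding group_part_def by simp
qed

lemma idem_gp: "e \<in> idems C m \<Longrightarrow> e \<in> gp e"
  using idem_inv idemsD by (simp add: group_part_def)

lemma gp_mult: assumes x: "x \<in> gp e" and y: "y \<in> gp f" shows "x \<cdot> y \<in> gp (e \<cdot> f)"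
proof (rule gpI)
  have xC: "x \<in> C" and yC: "y \<in> C" using x y gpD by auto
  have ei: "e \<in> idems C m" "f \<in> idems C m" using x y gp_idem by auto
  have "x \<cdot> y \<cdot> iv (x \<cdot> y) = x \<cdot> (y \<cdot> iv y) \<cdot> iv x" using xC yC by (simp add: inv_mult assoc)
  also have "\<dots> = x \<cdot> f \<cdot> iv x" using y gpD by simp
  also have "\<dots> = (f \<cdot> x) \<cdot> iv x" using central[OF ei(2) xC] by simp
  also have "\<dots> = f \<cdot> (x \<cdot> iv x)" using xC ei by (simp add: assoc idemsD)
  also have "\<dots> = e \<cdot> f" using x gpD idem_comm ei by metis
  finally show "x \<cdot> y \<cdot> iv (x \<cdot> y) = e \<cdot> f" .
qed (use assms gpD in auto)

lemma gp_same: "x \<in> gp e \<Longrightarrow> x \<in> gp e' \<Longrightarrow> e = e'"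
  using gpD by metis

lemma gp_solve: assumes x: "x \<in> gp e" and y: "y \<in> gp e" and h: "x \<cdot> y \<cdot> x = x"
  shows "x = iv y"
proof -
  have xC: "x \<in> C" and yC: "y \<in> C" using x y gpD by auto
  have "iv x \<cdot> (x \<cdot> y \<cdot> x) \<cdot> iv x = (iv x \<cdot> x) \<cdot> y \<cdot> (x \<cdot> iv x)"
    using xC yC by (simp add: assoc)
  also have "\<dots> = y" using gpD[OF x] gp_l[OF y] gp_r[OF y] by simp
  finally have "y = iv x" using h ixi xC by (simp add: assoc)
  then show ?thesis using xC by simp
qed

lemma endo_gp: assumes "endo C m \<phi>" "x \<in> gp e" shows "\<phi> x \<in> gp (\<phi> e)"
proof (rule gpI)
  have xC: "x \<in> C" using assms gpD by auto
  show "\<phi> x \<in> C" using assms(1) xC unfolding endo_def by auto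
  show "\<phi> x \<cdot> iv (\<phi> x) = \<phi> e"
  proof -
    have "\<phi> x \<cdot> iv (\<phi> x) = \<phi> x \<cdot> \<phi> (iv x)" using endo_inv[OF assms(1) xC] by simp
    also have "\<dots> = \<phi> (x \<cdot> iv x)" using assms(1) xC unfolding endo_def by simp
    finally show ?thesis using gpD[OF assms(2)] by simp
  qed
qed

end




context invsg begin
lemma xix_z: "x \<in> C \<Longrightarrow> z \<in> C \<Longrightarrow> x \<cdot> (iv x \<cdot> (x \<cdot> z)) = x \<cdot> z"
  by (metis assoc closed inv_closed xix)
lemma ixi_z: "x \<in> C \<Longrightarrow> z \<in> C \<Longrightarrow> iv x \<cdot> (x \<cdot> (iv x \<cdot> z)) = iv x \<cdot> z"
  by (metis assoc closed inv_closed ixi)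
end

locale tw =
  fixes A :: "'a set" and mA :: "'a \<Rightarrow> 'a \<Rightarrow> 'a" (infixl "\<odot>" 70)
    and S :: "'s set" and mS :: "'s \<Rightarrow> 's \<Rightarrow> 's" (infixl "\<star>" 70)
    and \<alpha> :: "'s \<Rightarrow> 'a" and lam :: "'s \<Rightarrow> 'a \<Rightarrow> 'a" and f :: "'s \<Rightarrow> 's \<Rightarrow> 'a"
  assumes slgA: "semilattice_of_groups A mA" and isgS: "inverse_semigroup S mS"
    and tm: "twisted_module A mA S mS \<alpha> lam f"
begin

sublocale A: slg A mA
  using slgA unfolding semilattice_of_groups_def slg_def slg_axioms_def invsg_def by auto
sublocale S: invsg S mS
  using isgS by (simp add: invsg_def)

abbreviation "iA \<equiv> sinv A mA"
abbreviation "iS \<equiv> sinv S mS"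
abbreviation "ES \<equiv> idems S mS"
abbreviation "EA \<equiv> idems A mA"

lemma alpha_bij: "bij_betw \<alpha> ES EA" using tm unfolding twisted_module_def by blast
lemma alpha_EA: "e \<in> ES \<Longrightarrow> \<alpha> e \<in> EA" using alpha_bij bij_betwE by blast
lemma alpha_A[simp]: "e \<in> ES \<Longrightarrow> \<alpha> e \<in> A" using alpha_EA A.idemsD by blast
lemma alpha_idem: "e \<in> ES \<Longrightarrow> \<alpha> e \<odot> \<alpha> e = \<alpha> e" using alpha_EA A.idemsD by blast
lemma alpha_mult: "e \<in> ES \<Longrightarrow> e' \<in> ES \<Longrightarrow> \<alpha> (e \<star> e') = \<alpha> e \<odot> \<alpha> e'"
  using tm unfolding twisted_module_def by blast
lemma alpha_inv: "e \<in> ES \<Longrightarrow> inv_into ES \<alpha> (\<alpha> e) = e"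
  using alpha_bij bij_betw_inv_into_left by metis
lemma alpha_surj: "x \<in> EA \<Longrightarrow> inv_into ES \<alpha> x \<in> ES \<and> \<alpha> (inv_into ES \<alpha> x) = x"
  using alpha_bij by (metis bij_betw_def inv_into_into f_inv_into_f)
lemma lam_endo: "s \<in> S \<Longrightarrow> endo A mA (lam s)"
  using tm unfolding twisted_module_def rel_invertible_def by blast
lemma lam_A[simp]: "s \<in> S \<Longrightarrow> a \<in> A \<Longrightarrow> lam s a \<in> A"
  using lam_endo unfolding endo_def by blast
lemma lam_mult: "s \<in> S \<Longrightarrow> a \<in> A \<Longrightarrow> b \<in> A \<Longrightarrow> lam s (a \<odot> b) = lam s a \<odot> lam s b"
  using lam_endo unfolding endo_def by blast
lemma f_gp: "s \<in> S \<Longrightarrow> t \<in> S \<Longrightarrow> f s t \<in> A.gp (\<alpha> (s \<star> t \<star> iS t \<star> iS s))"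
  using tm unfolding twisted_module_def by blast
lemma f_A[simp]: "s \<in> S \<Longrightarrow> t \<in> S \<Longrightarrow> f s t \<in> A"
  using f_gp A.gpD by blast
lemma lam_idem: "e \<in> ES \<Longrightarrow> a \<in> A \<Longrightarrow> lam e a = \<alpha> e \<odot> a"
  using tm unfolding twisted_module_def by blast
lemma lam_alpha: "s \<in> S \<Longrightarrow> e \<in> ES \<Longrightarrow> lam s (\<alpha> e) = \<alpha> (s \<star> e \<star> iS s)"
  using tm unfolding twisted_module_def by blast
lemma lam_comp: "s \<in> S \<Longrightarrow> t \<in> S \<Longrightarrow> a \<in> A \<Longrightarrow>
   lam s (lam t a) = f s t \<odot> lam (s \<star> t) a \<odot> iA (f s t)"
  using tm unfolding twisted_module_def by blast
lemma f_n1: "s \<in> S \<Longrightarrow> e \<in> ES \<Longrightarrow> f (s \<star> e) e = \<alpha> (s \<star> e \<star> iS s)"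
  using tm unfolding twisted_module_def by blast
lemma f_n2: "s \<in> S \<Longrightarrow> e \<in> ES \<Longrightarrow> f e (e \<star> s) = \<alpha> (e \<star> s \<star> iS s)"
  using tm unfolding twisted_module_def by blast
lemma cocycle: "s \<in> S \<Longrightarrow> t \<in> S \<Longrightarrow> u \<in> S \<Longrightarrow>
   lam s (f t u) \<odot> f s (t \<star> u) = f s t \<odot> f (s \<star> t) u"
  using tm unfolding twisted_module_def by blast

lemma ES_S[simp]: "e \<in> ES \<Longrightarrow> e \<in> S" using S.idemsD by blast
lemma ES_sq: "e \<in> ES \<Longrightarrow> e \<star> e = e" using S.idemsD by blast
lemma ssi_E[simp]: "s \<in> S \<Longrightarrow> s \<star> iS s \<in> ES" using S.xxi_idem by blast
lemma sis_E[simp]: "s \<in> S \<Longrightarrow> iS s \<star> s \<in> ES" using S.ixx_idem by blast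
lemma conj_E[simp]: "s \<in> S \<Longrightarrow> e \<in> ES \<Longrightarrow> s \<star> e \<star> iS s \<in> ES" using S.conj_idem by blast
lemma sss[simp]: "s \<in> S \<Longrightarrow> s \<star> iS s \<star> s = s" using S.inv_ex by blast
lemma isis[simp]: "s \<in> S \<Longrightarrow> iS s \<star> s \<star> iS s = iS s" using S.inv_ex by blast


lemma F_gp: assumes "s \<in> S" shows "f s (iS s) \<in> A.gp (\<alpha> (s \<star> iS s))"
  using f_gp[of s "iS s"] assms by simp

lemma G_gp: assumes "s \<in> S" shows "f (iS s) s \<in> A.gp (\<alpha> (iS s \<star> s))"
  using f_gp[of "iS s" s] assms by simp

lemma f_s_sis: assumes "s \<in> S" shows "f s (iS s \<star> s) = \<alpha> (s \<star> iS s)"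
proof -
  have "f (s \<star> (iS s \<star> s)) (iS s \<star> s) = \<alpha> (s \<star> (iS s \<star> s) \<star> iS s)"
    using f_n1[of s "iS s \<star> s"] assms by simp
  moreover have "s \<star> (iS s \<star> s) = s" using assms S.xix by simp
  ultimately show ?thesis by simp
qed

lemma f_ssi_s: assumes "s \<in> S" shows "f (s \<star> iS s) s = \<alpha> (s \<star> iS s)"
proof -
  have "f (s \<star> iS s) (s \<star> iS s \<star> s) = \<alpha> (s \<star> iS s \<star> s \<star> iS s)"
    using f_n2[of s "s \<star> iS s"] assms by simp
  then show ?thesis using assms by simp
qed

lemma f_sis_si: assumes "s \<in> S" shows "f (iS s \<star> s) (iS s) = \<alpha> (iS s \<star> s)"
proof -
  have "f (iS s \<star> s) (iS s \<star> s \<star> iS s) = \<alpha> (iS s \<star> s \<star> iS s \<star> iS (iS s))"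
    using f_n2[of "iS s" "iS s \<star> s"] assms by simp
  then show ?thesis using assms by simp
qed

lemma lam_G: assumes s: "s \<in> S" shows "lam s (f (iS s) s) = f s (iS s)"
proof -
  have c: "lam s (f (iS s) s) \<odot> f s (iS s \<star> s) = f s (iS s) \<odot> f (s \<star> iS s) s"
    using cocycle[of s "iS s" s] s by simp
  have "lam s (f (iS s) s) \<in> A.gp (lam s (\<alpha> (iS s \<star> s)))"
    using A.endo_gp[OF lam_endo[OF s] G_gp[OF s]] .
  moreover have "lam s (\<alpha> (iS s \<star> s)) = \<alpha> (s \<star> iS s)"
    using lam_alpha[of s "iS s \<star> s"] s S.assoc by (simp add: S.xix_z)
  ultimately have g: "lam s (f (iS s) s) \<in> A.gp (\<alpha> (s \<star> iS s))" by simp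
  have "lam s (f (iS s) s) = lam s (f (iS s) s) \<odot> \<alpha> (s \<star> iS s)" using A.gp_r[OF g] by simp
  also have "\<dots> = f s (iS s) \<odot> \<alpha> (s \<star> iS s)" using c f_s_sis f_ssi_s s by simp
  also have "\<dots> = f s (iS s)" using A.gp_r[OF F_gp[OF s]] .
  finally show ?thesis .
qed

lemma lam_iG: assumes s: "s \<in> S" shows "lam s (iA (f (iS s) s)) = iA (f s (iS s))"
  using A.endo_inv[OF lam_endo[OF s], of "f (iS s) s"] lam_G s by simp


abbreviation "CC \<equiv> cp_carrier A mA S mS \<alpha>"
abbreviation "mul \<equiv> cp_mult mA mS lam f"
abbreviation "rho s \<equiv> (\<alpha> (s \<star> iS s), s)"

lemma mul_simp: "mul (a, s) (b, t) = (a \<odot> lam s b \<odot> f s t, s \<star> t)"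
  by (simp add: cp_mult_def)

lemma CC_iff: "(b, t) \<in> CC \<longleftrightarrow> b \<in> A \<and> t \<in> S \<and> b \<odot> iA b = \<alpha> (t \<star> iS t)"
  by (simp add: cp_carrier_def)

lemma lam_si_ssi: assumes s: "s \<in> S" shows "lam (iS s) (\<alpha> (s \<star> iS s)) = \<alpha> (iS s \<star> s)"
  using lam_alpha[of "iS s" "s \<star> iS s"] s S.assoc by (simp add: S.ixi_z)

lemma yrho: assumes s: "s \<in> S" and b: "b \<in> A.gp (\<alpha> (iS s \<star> s))"
  shows "mul (b, iS s) (rho s) = (b \<odot> f (iS s) s, iS s \<star> s)"
  using b s by (simp add: mul_simp lam_si_ssi A.gp_r)

lemma rho_inv: assumes s: "s \<in> S"
  shows "sinv CC mul (rho s) = (iA (f (iS s) s), iS s)"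
proof -
  define G where "G = f (iS s) s"
  define F where "F = f s (iS s)"
  define E1 where "E1 = \<alpha> (s \<star> iS s)"
  define E2 where "E2 = \<alpha> (iS s \<star> s)"
  have G: "G \<in> A.gp E2" using G_gp s G_def E2_def by simp
  have F: "F \<in> A.gp E1" using F_gp s F_def E1_def by simp
  have GA: "G \<in> A" and FA: "F \<in> A" using G F A.gpD by auto
  have E2A: "E2 \<in> A" using E2_def s by simp
  have iG: "iA G \<in> A.gp E2" using A.gp_inv[OF G] .
  define y0 where "y0 = (iA G, iS s)"
  have P0: "y0 \<in> CC \<and> mul (mul (rho s) y0) (rho s) = rho s \<and> mul (mul y0 (rho s)) y0 = y0"
  proof (intro conjI)
    show "y0 \<in> CC" unfolding y0_def CC_iff using s A.gpD[OF iG] GA E2_def by simp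
    have "mul (rho s) y0 = (E1 \<odot> iA F \<odot> F, s \<star> iS s)"
      unfolding y0_def mul_simp using lam_iG s G_def F_def E1_def by simp
    also have "\<dots> = (E1, s \<star> iS s)"
      using A.gpD[OF F] FA s E1_def alpha_idem by (simp add: A.assoc)
    finally have 1: "mul (rho s) y0 = (E1, s \<star> iS s)" .
    show "mul (mul (rho s) y0) (rho s) = rho s"
      unfolding 1 mul_simp using s E1_def lam_idem f_ssi_s alpha_idem by simp
    have 2: "mul y0 (rho s) = (E2, iS s \<star> s)"
      unfolding y0_def using yrho[OF s iG[unfolded E2_def]] A.gpD[OF G] G_def E2_def GA by simp
    show "mul (mul y0 (rho s)) y0 = y0"
      unfolding 2 unfolding y0_def mul_simp using s E2_def lam_idem f_sis_si A.gp_l[OF iG] A.gp_r[OF iG]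
        alpha_idem GA by (simp add: A.assoc)
  qed
  have U: "y = y0" if "y \<in> CC \<and> mul (mul (rho s) y) (rho s) = rho s \<and> mul (mul y (rho s)) y = y" for y
  proof -
    obtain b t where y: "y = (b, t)" by force
    have yC: "b \<in> A" "t \<in> S" "b \<odot> iA b = \<alpha> (t \<star> iS t)" using that y CC_iff by auto
    have 1: "s \<star> t \<star> s = s" using that y by (simp add: mul_simp)
    have 2: "t \<star> s \<star> t = t" using that y by (simp add: mul_simp)
    have t: "iS s = t" using S.inv_uniq[OF s yC(2) 1 2] .
    have it: "iS t = s" using t s S.inv_inv by blast
    have b: "b \<in> A.gp E2" using A.gpI[OF yC(1) yC(3)] t it E2_def by simp
    have y': "y = (b, iS s)" using y t by simp
    have "mul y (rho s) = (b \<odot> G, iS s \<star> s)" using yrho[OF s b[unfolded E2_def]] y' G_def by simp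
    moreover have "lam (iS s \<star> s) b = E2 \<odot> b" using lam_idem[of "iS s \<star> s" b] s yC E2_def by simp
    ultimately have "mul (mul y (rho s)) y = (b \<odot> G \<odot> (E2 \<odot> b) \<odot> E2, iS s)"
      using y' s E2_def f_sis_si[OF s] by (simp add: mul_simp)
    also have "\<dots> = (b \<odot> G \<odot> b \<odot> E2, iS s)"
      using A.gp_l[OF b] by simp
    also have "\<dots> = (b \<odot> G \<odot> b, iS s)"
      using A.gp_r[OF b] A.assoc[of "b \<odot> G" b E2] GA yC E2A by simp
    finally have "b \<odot> G \<odot> b = b" using that y' by simp
    then have "b = iA G" using A.gp_solve[OF b G] by simp
    then show ?thesis using y' y0_def by simp
  qed
  have ex: "\<exists>!y. y \<in> CC \<and> mul (mul (rho s) y) (rho s) = rho s \<and> mul (mul y (rho s)) y = y"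
    using P0 U by blast
  have "(THE y. y \<in> CC \<and> mul (mul (rho s) y) (rho s) = rho s \<and> mul (mul y (rho s)) y = y) = y0"
    by (rule the1_equality[OF ex]) (rule P0)
  then have "sinv CC mul (rho s) = y0"
    by (simp only: sinv_def)
  then show ?thesis using y0_def G_def by simp
qed


abbreviation "ii \<equiv> cp_incl A mA S mS \<alpha>"

lemma ii_inj: "inj_on ii A" by (rule inj_onI) (simp add: cp_incl_def)

lemma ii_gp: assumes "g \<in> ES" "x \<in> A.gp (\<alpha> g)" shows "ii x = (x, g)"
  using assms A.gpD[OF assms(2)] alpha_inv by (simp add: cp_incl_def)

lemma inv_ii: "x \<in> A \<Longrightarrow> inv_into A ii (ii x) = x"
  using inv_into_f_f[OF ii_inj] by blast

lemma alpha_gp: "e \<in> ES \<Longrightarrow> \<alpha> e \<in> A.gp (\<alpha> e)"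
  using A.idem_gp alpha_EA by blast

lemma rho_idem: "e \<in> ES \<Longrightarrow> rho e = (\<alpha> e, e)"
  using S.idem_inv ES_sq by simp

lemma part2: assumes "e \<in> ES" shows "induced_alpha A ii rho e = \<alpha> e"
proof -
  have "ii (\<alpha> e) = (\<alpha> e, e)" using ii_gp[OF assms alpha_gp[OF assms]] .
  then show ?thesis unfolding induced_alpha_def using rho_idem[OF assms] inv_ii[of "\<alpha> e"] assms by simp
qed

lemma part1: "transversal CC mul S mS snd rho"
  unfolding transversal_def
proof (intro conjI ballI subsetI)
  fix s assume s: "s \<in> S"
  have "\<alpha> (s \<star> iS s) \<odot> iA (\<alpha> (s \<star> iS s)) = \<alpha> (s \<star> iS s)"
    using A.idem_inv[OF alpha_EA] alpha_idem s by simp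
  then show "rho s \<in> CC" using s CC_iff by simp
  show "snd (rho s) = s" by simp
next
  fix x assume "x \<in> rho ` ES"
  then obtain e where e: "e \<in> ES" and x: "x = (\<alpha> e, e)" using rho_idem by auto
  have "\<alpha> e \<odot> iA (\<alpha> e) = \<alpha> e" using A.idem_inv[OF alpha_EA] alpha_idem e by simp
  then have xC: "x \<in> CC" using x e CC_iff S.idem_inv ES_sq by simp
  have fee: "f e e = \<alpha> e" using f_n1[OF _ e, of e] e ES_sq S.idem_inv by simp
  have "mul x x = x" unfolding x mul_simp using lam_idem e fee alpha_idem ES_sq by simp
  then show "x \<in> idems CC mul" using xC by (simp add: idems_def)
qed

lemma part4: assumes s: "s \<in> S" and t: "t \<in> S"
  shows "induced_f A mA S mS CC mul ii rho s t = f s t"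
proof -
  define u where "u = s \<star> t"
  define g where "g = u \<star> iS u"
  have u: "u \<in> S" using u_def s t by simp
  have g: "g \<in> ES" using g_def u by simp
  have gdef: "s \<star> t \<star> iS t \<star> iS s = g" using s t unfolding g_def u_def by (simp add: S.inv_mult S.assoc)
  have fg: "f s t \<in> A.gp (\<alpha> g)" using f_gp[OF s t] gdef by simp
  have 1: "mul (rho s) (rho t) = (f s t, u)"
  proof -
    have "lam s (\<alpha> (t \<star> iS t)) = \<alpha> g" using lam_alpha[OF s, of "t \<star> iS t"] t gdef s by (simp add: S.assoc)
    moreover have "\<alpha> (s \<star> iS s) \<odot> \<alpha> g = \<alpha> g"
    proof -
      have "s \<star> iS s \<star> g = g" using s t unfolding g_def u_def by (simp add: S.inv_mult S.assoc S.xix_z)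
      then show ?thesis using alpha_mult[of "s \<star> iS s" g] s g by simp
    qed
    ultimately show ?thesis unfolding mul_simp u_def using A.gp_l[OF fg] s t g by (simp add: A.assoc)
  qed
  have 2: "mul (ii x) (rho (s \<star> t)) = (x, u)" if x: "x \<in> A.gp (\<alpha> g)" for x
  proof -
    have "g \<star> u = u" using u unfolding g_def by simp
    moreover have "f g u = \<alpha> g" using f_n2[OF u g] \<open>g \<star> u = u\<close> g_def by simp
    moreover have "lam g (\<alpha> g) = \<alpha> g" using lam_idem g alpha_idem by simp
    ultimately show ?thesis unfolding ii_gp[OF g x] u_def[symmetric] g_def[symmetric] mul_simp
      using A.gp_r[OF x] alpha_idem g A.gpD[OF x] by (simp add: A.assoc)
  qed
  have P: "f s t \<in> A.gp (induced_alpha A ii rho (s \<star> t \<star> iS t \<star> iS s)) \<and>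
       mul (rho s) (rho t) = mul (ii (f s t)) (rho (s \<star> t))"
    using fg part2[OF g] gdef 1 2[OF fg] by simp
  have U: "x = f s t" if "x \<in> A.gp (induced_alpha A ii rho (s \<star> t \<star> iS t \<star> iS s)) \<and>
       mul (rho s) (rho t) = mul (ii x) (rho (s \<star> t))" for x
  proof -
    have x: "x \<in> A.gp (\<alpha> g)" using that part2[OF g] gdef by simp
    show ?thesis using that 1 2[OF x] by simp
  qed
  have ex: "\<exists>!x. x \<in> A.gp (induced_alpha A ii rho (s \<star> t \<star> iS t \<star> iS s)) \<and>
       mul (rho s) (rho t) = mul (ii x) (rho (s \<star> t))"
    using P U by blast
  have "(THE x. x \<in> A.gp (induced_alpha A ii rho (s \<star> t \<star> iS t \<star> iS s)) \<and>
       mul (rho s) (rho t) = mul (ii x) (rho (s \<star> t))) = f s t"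
    by (rule the1_equality[OF ex]) (rule P)
  then show ?thesis by (simp only: induced_f_def)
qed


lemma part3: assumes s: "s \<in> S" and a: "a \<in> A"
  shows "induced_lambda A CC mul ii rho s a =
     (let e = inv_into ES \<alpha> (a \<odot> iA a) in
         lam s a \<odot> iA (f s (iS s)) \<odot> f s e \<odot> f (s \<star> e) (iS s))"
proof -
  define e where "e = inv_into ES \<alpha> (a \<odot> iA a)"
  have eE: "e \<in> ES" and ae: "\<alpha> e = a \<odot> iA a"
    using alpha_surj[OF A.xxi_idem[OF a]] e_def by auto
  have ag: "a \<in> A.gp (\<alpha> e)" using A.gpI[OF a ae[symmetric]] .
  have iia: "ii a = (a, e)" using ii_gp[OF eE ag] .
  define G where "G = f (iS s) s"
  define F where "F = f s (iS s)"
  define E1 where "E1 = \<alpha> (s \<star> iS s)"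
  define E' where "E' = \<alpha> (s \<star> e \<star> iS s)"
  have E1A: "E1 \<in> A" and E'A: "E' \<in> A" using E1_def E'_def s eE by auto
  have E'E: "E' \<in> EA" using E'_def alpha_EA s eE by simp
  have GA: "G \<in> A" and FA: "F \<in> A" using G_def F_def s by auto
  have F: "F \<in> A.gp E1" using F_gp s F_def E1_def by simp
  have iF: "iA F \<in> A.gp E1" using A.gp_inv[OF F] .
  have la: "lam s a \<in> A.gp E'"
    using A.endo_gp[OF lam_endo[OF s] ag] lam_alpha[OF s eE] E'_def by simp
  have fse: "f s e \<in> A.gp E'"
  proof -
    have "s \<star> e \<star> iS e \<star> iS s = s \<star> e \<star> iS s"
      using S.idem_inv[OF eE] ES_sq[OF eE] s eE by (simp add: S.assoc)
    then show ?thesis using f_gp[OF s ES_S[OF eE]] E'_def by simp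
  qed
  have fse2: "f (s \<star> e) (iS s) \<in> A.gp E'"
  proof -
    have "s \<star> e \<star> iS s \<star> iS (iS s) \<star> iS (s \<star> e) = (s \<star> e \<star> iS s) \<star> (s \<star> e \<star> iS s)"
      using s eE S.idem_inv[OF eE] by (simp add: S.inv_mult S.assoc)
    also have "\<dots> = s \<star> e \<star> iS s" using S.idemsD[OF conj_E[OF s eE]] by simp
    finally show ?thesis using f_gp[of "s \<star> e" "iS s"] s eE E'_def by simp
  qed
  have E1E': "E1 \<odot> E' = E'"
  proof -
    have "s \<star> iS s \<star> (s \<star> e \<star> iS s) = s \<star> e \<star> iS s" using s eE by (simp add: S.assoc S.xix_z)
    then show ?thesis using alpha_mult[of "s \<star> iS s" "s \<star> e \<star> iS s"] s eE E1_def E'_def by simp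
  qed
  have E'E1: "E' \<odot> E1 = E'"
  proof -
    have "s \<star> e \<star> iS s \<star> (s \<star> iS s) = s \<star> e \<star> iS s" using s eE by (simp add: S.assoc S.ixi)
    then show ?thesis using alpha_mult[of "s \<star> e \<star> iS s" "s \<star> iS s"] s eE E1_def E'_def by simp
  qed
  have E'E': "E' \<odot> E' = E'" using A.idemsD[OF E'E] by simp
  define Y where "Y = lam (s \<star> e) (iA G)"
  have YA: "Y \<in> A" using Y_def s eE GA by simp
  have key: "f s e \<odot> Y = E' \<odot> iA F \<odot> f s e"
  proof -
    have "lam s (lam e (iA G)) = f s e \<odot> Y \<odot> iA (f s e)"
      using lam_comp[OF s ES_S[OF eE], of "iA G"] GA Y_def by simp
    moreover have "lam e (iA G) = \<alpha> e \<odot> iA G" using lam_idem eE GA by simp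
    moreover have "lam s (\<alpha> e \<odot> iA G) = E' \<odot> iA F"
      using lam_mult[OF s, of "\<alpha> e" "iA G"] eE GA lam_alpha[OF s eE] lam_iG[OF s] E'_def F_def G_def by simp
    ultimately have 1: "f s e \<odot> Y \<odot> iA (f s e) = E' \<odot> iA F" by simp
    have fA: "f s e \<in> A" using s eE by simp
    have "f s e \<odot> Y = f s e \<odot> (E' \<odot> Y)" using A.gp_r[OF fse] A.assoc[OF fA E'A YA] by simp
    also have "\<dots> = f s e \<odot> Y \<odot> E'" using A.central[OF E'E YA] A.assoc[OF fA YA E'A] by simp
    also have "\<dots> = f s e \<odot> Y \<odot> (iA (f s e) \<odot> f s e)" using A.gpD[OF fse] by simp
    also have "\<dots> = E' \<odot> iA F \<odot> f s e" using 1 fA YA A.assoc[of "f s e \<odot> Y" "iA (f s e)" "f s e"] by simp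
    finally show ?thesis .
  qed
  define T where "T = lam s a \<odot> iA F \<odot> f s e \<odot> f (s \<star> e) (iS s)"
  have TG: "T \<in> A.gp E'"
  proof -
    have "lam s a \<odot> iA F \<in> A.gp E'" using A.gp_mult[OF la iF] E'E1 by simp
    then have "lam s a \<odot> iA F \<odot> f s e \<in> A.gp E'" using A.gp_mult[OF _ fse] E'E' by metis
    then show ?thesis using A.gp_mult[OF _ fse2] E'E' T_def by metis
  qed
  have X: "mul (mul (rho s) (ii a)) (sinv CC mul (rho s)) = (T, s \<star> e \<star> iS s)"
  proof -
    have "mul (mul (rho s) (ii a)) (sinv CC mul (rho s)) =
       (E1 \<odot> lam s a \<odot> f s e \<odot> Y \<odot> f (s \<star> e) (iS s), s \<star> e \<star> iS s)"
      unfolding rho_inv[OF s] iia mul_simp Y_def E1_def G_def by simp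
    also have "E1 \<odot> lam s a \<odot> f s e \<odot> Y = E1 \<odot> lam s a \<odot> (f s e \<odot> Y)"
      using E1A s a eE YA by (simp add: A.assoc)
    also have "\<dots> = E1 \<odot> (lam s a \<odot> E') \<odot> iA F \<odot> f s e"
      unfolding key using E1A s a eE E'A FA by (simp add: A.assoc)
    also have "\<dots> = E1 \<odot> (E' \<odot> lam s a) \<odot> iA F \<odot> f s e"
      using A.gp_l[OF la] A.gp_r[OF la] by simp
    also have "\<dots> = lam s a \<odot> iA F \<odot> f s e"
      using A.gp_l[OF la] A.assoc[OF E1A E'A, of "lam s a"] E1E' s a by simp
    finally show ?thesis using T_def by simp
  qed
  have "induced_lambda A CC mul ii rho s a = T"
    unfolding induced_lambda_def X ii_gp[OF conj_E[OF s eE] TG[unfolded E'_def], symmetric]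
    using inv_ii TG A.gpD by blast
  then show ?thesis using T_def e_def F_def by (simp add: Let_def)
qed

end

theorem proposition3p19:
  fixes A :: "'a set" and mA :: "'a \<Rightarrow> 'a \<Rightarrow> 'a"
    and S :: "'s set" and mS :: "'s \<Rightarrow> 's \<Rightarrow> 's"
    and \<alpha> :: "'s \<Rightarrow> 'a" and lam :: "'s \<Rightarrow> 'a \<Rightarrow> 'a" and f :: "'s \<Rightarrow> 's \<Rightarrow> 'a"
  assumes "semilattice_of_groups A mA"
    and "inverse_semigroup S mS"
    and "twisted_module A mA S mS \<alpha> lam f"
  defines "C \<equiv> cp_carrier A mA S mS \<alpha>"
    and "mC \<equiv> cp_mult mA mS lam f"
    and "i \<equiv> cp_incl A mA S mS \<alpha>"
    and "\<rho> \<equiv> (\<lambda>s. (\<alpha> (mS s (sinv S mS s)), s))"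
  shows "transversal C mC S mS snd \<rho> \<and>
    (\<forall>e\<in>idems S mS. induced_alpha A i \<rho> e = \<alpha> e) \<and>
    (\<forall>s\<in>S. \<forall>a\<in>A. induced_lambda A C mC i \<rho> s a =
        (let e = inv_into (idems S mS) \<alpha> (mA a (sinv A mA a)) in
         mA (mA (mA (lam s a) (sinv A mA (f s (sinv S mS s)))) (f s e))
            (f (mS s e) (sinv S mS s)))) \<and>
    (\<forall>s\<in>S. \<forall>t\<in>S. induced_f A mA S mS C mC i \<rho> s t = f s t)"
proof -
  interpret tw A mA S mS \<alpha> lam f using assms(1-3) by (simp add: tw_def)
  show ?thesis unfolding C_def mC_def i_def \<rho>_def
    apply (intro conjI ballI)
       apply (rule part1)
      apply (erule part2)
     apply (erule (1) part3)
    apply (erule (1) part4)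
    done
qed

end
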